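(* Let $X\in\mathbb{R}^{n\times m}$ be a random matrix with independent centered entries that are sub-Poisson with variance proxy $\sigma^2$, and let $S_i=\|X_{i:}\|_1-\mathbb{E}\|X_{i:}\|_1$ for $i\in[n]$. If $m\sigma^2\le8\log(en)$, then for all $t\ge0$, $$\Pr\Big(\sum_{i=1}^n\mathbb{I}\{S_i\ge(1+t)m\sigma^2\}\ge\frac{en}{e^{m\sigma^2/8}}\Big)\le(en)^{-t}.$$ If $m\sigma^2\ge8\log(en)$, then for all $t\ge0$, $$\Pr\Big(\max_iS_i\ge(1+t)\sqrt{8m\sigma^2\log(en)}\Big)\le(en)^{-t}.$$
   Context: A real random variable $Y$ is sub-Poisson with variance proxy $\sigma^2\ge0$ if $\mathbb{E}e^{\lambda(Y-\mathbb{E}Y)}\le\exp\{\sigma^2(e^{|\lambda|}-1-|\lambda|)\}$ for all $\lambda\in\mathbb{R}$. $\|\cdot\|_1$ is the $\ell_1$ norm of a row. *)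

theory Defs
  imports "HOL-Probability.Probability"
begin

definition sub_poisson :: "'a measure \<Rightarrow> ('a \<Rightarrow> real) \<Rightarrow> real \<Rightarrow> bool" where
  "sub_poisson M Y s2 \<longleftrightarrow> s2 \<ge> 0 \<and> integrable M Y \<and>
     (\<forall>l::real. integrable M (\<lambda>x. exp (l * (Y x - integral\<^sup>L M Y))) \<and>
        integral\<^sup>L M (\<lambda>x. exp (l * (Y x - integral\<^sup>L M Y)))
          \<le> exp (s2 * (exp \<bar>l\<bar> - 1 - \<bar>l\<bar>)))"

definition row_dev :: "'a measure \<Rightarrow> (nat \<Rightarrow> nat \<Rightarrow> 'a \<Rightarrow> real) \<Rightarrow> nat \<Rightarrow> nat \<Rightarrow> 'a \<Rightarrow> real" where
  "row_dev M X m i \<omega> = (\<Sum>j<m. \<bar>X i j \<omega>\<bar>) - integral\<^sup>L M (\<lambda>\<omega>'. \<Sum>j<m. \<bar>X i j \<omega>'\<bar>)"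

end

theory Submission
  imports Defs
begin


lemma pow_fact_le_exp:
  fixes x :: real assumes "0 \<le> x"
  shows "x ^ n / fact n \<le> exp x"
proof -
  have "(\<Sum>i\<in>{n}. inverse (fact i) * x ^ i) \<le> (\<Sum>i. inverse (fact i) * x ^ i)"
    using assms by (intro sum_le_suminf[OF summable_exp]) auto
  then show ?thesis by (simp add: exp_def divide_inverse mult.commute)
qed

lemma choose_le_exp:
  assumes "1 \<le> k"
  shows "real (n choose k) \<le> (exp 1 * real n / real k) ^ k"
proof -
  have a: "real (n choose k) * fact k \<le> real n ^ k"
    using binomial_fact_pow[of n k] by (metis of_nat_fact of_nat_le_iff of_nat_mult of_nat_power)
  have b: "real k ^ k / fact k \<le> exp (real k)" by (rule pow_fact_le_exp) simp
  have kpos: "real k > 0" using assms by simp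
  have "real (n choose k) \<le> real n ^ k / fact k"
    using a by (simp add: field_simps)
  also have "\<dots> = (real n / real k) ^ k * (real k ^ k / fact k)"
    using kpos by (simp add: power_divide)
  also have "\<dots> \<le> (real n / real k) ^ k * exp (real k)"
    by (intro mult_left_mono b) simp
  also have "exp (real k) = exp 1 ^ k" by (simp add: exp_of_nat_mult[symmetric])
  also have "(real n / real k) ^ k * exp 1 ^ k = (exp 1 * real n / real k) ^ k"
    by (simp add: power_mult_distrib[symmetric] mult.commute)
  finally show ?thesis .
qed

lemma abs_exp_ineq:
  fixes l x :: real assumes "0 \<le> l"
  shows "exp (l * \<bar>x\<bar>) \<le> exp (l * x) + exp (- l * x) - 1 + l * \<bar>x\<bar>"
proof (cases "x \<ge> 0")
  case True
  have "1 + (- l * x) \<le> exp (- l * x)" using exp_ge_add_one_self by blast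
  then show ?thesis using True by simp
next
  case False
  have "1 + (l * x) \<le> exp (l * x)" using exp_ge_add_one_self by blast
  moreover have "exp (l * \<bar>x\<bar>) = exp (- l * x)" using False by simp
  moreover have "l * \<bar>x\<bar> = - l * x" using False by simp
  ultimately show ?thesis by linarith
qed

lemma two_exp_le: "2 * exp (u::real) - 1 \<le> exp (2 * u)"
proof -
  have "0 \<le> (exp u - 1)^2" by simp
  then show ?thesis by (simp add: power2_eq_square exp_add[symmetric] algebra_simps mult_2)
qed

lemma psi_le: "0 \<le> l \<Longrightarrow> l \<le> 1 \<Longrightarrow> exp l - 1 - l \<le> (l::real)^2"
  using exp_bound[of l] by simp



lemma entry_mgf:
  fixes Y :: "'a \<Rightarrow> real"
  assumes P: "prob_space M" and sp: "sub_poisson M Y s2" and c: "integral\<^sup>L M Y = 0" and l: "0 \<le> l"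
  shows "integrable M (\<lambda>x. exp (l * (\<bar>Y x\<bar> - integral\<^sup>L M (\<lambda>x. \<bar>Y x\<bar>))))"
    and "integral\<^sup>L M (\<lambda>x. exp (l * (\<bar>Y x\<bar> - integral\<^sup>L M (\<lambda>x. \<bar>Y x\<bar>)))) \<le> exp (2 * s2 * (exp l - 1 - l))"
proof -
  interpret prob_space M by (rule P)
  define a where "a = integral\<^sup>L M (\<lambda>x. \<bar>Y x\<bar>)"
  define u where "u = s2 * (exp l - 1 - l)"
  have s2: "s2 \<ge> 0" and iY: "integrable M Y" using sp unfolding sub_poisson_def by auto
  have "integrable M (\<lambda>x. exp (l * (Y x - integral\<^sup>L M Y)))"
    "integral\<^sup>L M (\<lambda>x. exp (l * (Y x - integral\<^sup>L M Y))) \<le> exp (s2 * (exp \<bar>l\<bar> - 1 - \<bar>l\<bar>))"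
    using sp unfolding sub_poisson_def by blast+
  then have i1: "integrable M (\<lambda>x. exp (l * Y x))" and b1: "integral\<^sup>L M (\<lambda>x. exp (l * Y x)) \<le> exp u"
    using c l unfolding u_def by auto
  have "integrable M (\<lambda>x. exp ((-l) * (Y x - integral\<^sup>L M Y)))"
    "integral\<^sup>L M (\<lambda>x. exp ((-l) * (Y x - integral\<^sup>L M Y))) \<le> exp (s2 * (exp \<bar>-l\<bar> - 1 - \<bar>-l\<bar>))"
    using sp unfolding sub_poisson_def by blast+
  then have i2: "integrable M (\<lambda>x. exp (- l * Y x))" and b2: "integral\<^sup>L M (\<lambda>x. exp (- l * Y x)) \<le> exp u"
    using c l unfolding u_def by auto
  have i2': "integrable M (\<lambda>x. exp (- (l * Y x)))" using i2 by simp
  have iA: "integrable M (\<lambda>x. \<bar>Y x\<bar>)" using iY by (rule integrable_abs)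
  have a0: "a \<ge> 0" unfolding a_def by (rule integral_nonneg_AE) auto
  have u0: "u \<ge> 0" proof - have "0 \<le> exp l - 1 - l" using exp_ge_add_one_self[of l] by linarith then show ?thesis unfolding u_def using s2 by simp qed
  have eqmax: "(\<lambda>x. exp (l * \<bar>Y x\<bar>)) = (\<lambda>x. max (exp (l * Y x)) (exp (- l * Y x)))"
  proof (intro ext)
    fix x show "exp (l * \<bar>Y x\<bar>) = max (exp (l * Y x)) (exp (- l * Y x))"
    proof (cases "Y x \<ge> 0")
      case True
      then have "- l * Y x \<le> l * Y x" using l by (simp add: mult_nonneg_nonneg)
      then show ?thesis using True by (simp add: max_def)
    next
      case False
      then have "l * Y x \<le> - l * Y x" using l by (simp add: mult_nonneg_nonpos)
      then show ?thesis using False by (simp add: max_def)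
    qed
  qed
  have iE: "integrable M (\<lambda>x. exp (l * \<bar>Y x\<bar>))"
    unfolding eqmax by (intro integrable_max i1 i2)
  have eq2: "(\<lambda>x. exp (l * (\<bar>Y x\<bar> - a))) = (\<lambda>x. exp (- l * a) * exp (l * \<bar>Y x\<bar>))"
    by (auto simp: exp_add[symmetric] algebra_simps intro!: ext)
  show "integrable M (\<lambda>x. exp (l * (\<bar>Y x\<bar> - integral\<^sup>L M (\<lambda>x. \<bar>Y x\<bar>))))"
    using eq2 iE unfolding a_def[symmetric] by simp
  have "integral\<^sup>L M (\<lambda>x. exp (l * \<bar>Y x\<bar>)) \<le> integral\<^sup>L M (\<lambda>x. exp (l * Y x) + exp (- l * Y x) - 1 + l * \<bar>Y x\<bar>)"
    using l by (intro integral_mono iE abs_exp_ineq) (auto intro!: Bochner_Integration.integrable_add Bochner_Integration.integrable_diff i1 i2 i2' iA)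
  also have "\<dots> = integral\<^sup>L M (\<lambda>x. exp (l * Y x)) + integral\<^sup>L M (\<lambda>x. exp (- l * Y x)) - 1 + l * a"
    unfolding a_def using i1 i2 iA
    by (subst Bochner_Integration.integral_add, (auto intro!: Bochner_Integration.integrable_add Bochner_Integration.integrable_diff)[2],
        subst Bochner_Integration.integral_diff, (auto intro!: Bochner_Integration.integrable_add)[2],
        subst Bochner_Integration.integral_add) (auto simp: prob_space)
  also have "\<dots> \<le> 2 * exp u - 1 + l * a" using b1 b2 by simp
  finally have B: "integral\<^sup>L M (\<lambda>x. exp (l * \<bar>Y x\<bar>)) \<le> 2 * exp u - 1 + l * a" .
  have "integral\<^sup>L M (\<lambda>x. exp (l * (\<bar>Y x\<bar> - a))) = exp (- l * a) * integral\<^sup>L M (\<lambda>x. exp (l * \<bar>Y x\<bar>))"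
    unfolding eq2 by simp
  also have "\<dots> \<le> exp (- l * a) * (2 * exp u - 1 + l * a)"
    using B by (intro mult_left_mono) auto
  also have "\<dots> = exp (- l * a) * (2 * exp u - 2) + exp (- l * a) * (1 + l * a)"
    by (simp add: algebra_simps)
  also have "\<dots> \<le> 1 * (2 * exp u - 2) + 1"
  proof (rule add_mono)
    show "exp (- l * a) * (2 * exp u - 2) \<le> 1 * (2 * exp u - 2)"
      using u0 l a0 by (intro mult_right_mono) (auto simp: mult_nonneg_nonneg)
    have "1 + l * a \<le> exp (l * a)" by (rule exp_ge_add_one_self)
    then have "exp (- l * a) * (1 + l * a) \<le> exp (- l * a) * exp (l * a)"
      by (intro mult_left_mono) auto
    then show "exp (- l * a) * (1 + l * a) \<le> 1" by (simp add: exp_add[symmetric])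
  qed
  also have "\<dots> \<le> exp (2 * u)" using two_exp_le[of u] by simp
  finally show "integral\<^sup>L M (\<lambda>x. exp (l * (\<bar>Y x\<bar> - integral\<^sup>L M (\<lambda>x. \<bar>Y x\<bar>)))) \<le> exp (2 * s2 * (exp l - 1 - l))"
    unfolding a_def u_def by (simp add: mult.assoc)
qed



lemma core:
  fixes M :: "'a measure" and X :: "nat \<Rightarrow> nat \<Rightarrow> 'a \<Rightarrow> real"
    and n m :: nat and \<sigma>2 :: real
  assumes P: "prob_space M"
    and indep: "prob_space.indep_vars M (\<lambda>_. borel) (\<lambda>(i, j). X i j) ({..<n} \<times> {..<m})"
    and centered: "\<And>i j. i < n \<Longrightarrow> j < m \<Longrightarrow> integral\<^sup>L M (X i j) = 0"
    and subP: "\<And>i j. i < n \<Longrightarrow> j < m \<Longrightarrow> sub_poisson M (X i j) \<sigma>2"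
    and T: "T \<subseteq> {..<n}" and l: "0 \<le> l"
  shows "measure M {\<omega> \<in> space M. \<forall>i\<in>T. row_dev M X m i \<omega> \<ge> x}
           \<le> exp (- l * x + 2 * (real m * \<sigma>2) * (exp l - 1 - l)) ^ card T"
proof -
  interpret prob_space M by (rule P)
  define a where "a i j = integral\<^sup>L M (\<lambda>\<omega>. \<bar>X i j \<omega>\<bar>)" for i j
  define W where "W p \<omega> = (case p of (i, j) \<Rightarrow> exp (l * (\<bar>X i j \<omega>\<bar> - a i j)))" for p \<omega>
  define \<psi> where "\<psi> = exp l - 1 - l"
  have finT: "finite T" using T finite_subset by blast
  have rv: "X i j \<in> borel_measurable M" if "i < n" "j < m" for i j
    using indep that unfolding indep_vars_def by auto
  have iX: "integrable M (X i j)" if "i < n" "j < m" for i j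
    using subP[OF that] unfolding sub_poisson_def by auto
  have rd: "row_dev M X m i \<omega> = (\<Sum>j<m. \<bar>X i j \<omega>\<bar> - a i j)" if "i < n" for i \<omega>
  proof -
    have "integral\<^sup>L M (\<lambda>\<omega>'. \<Sum>j<m. \<bar>X i j \<omega>'\<bar>) = (\<Sum>j<m. a i j)"
      unfolding a_def by (rule Bochner_Integration.integral_sum, rule integrable_abs, rule iX[OF that]) auto
    then show ?thesis unfolding row_dev_def by (simp add: sum_subtractf)
  qed
  have indW: "indep_vars (\<lambda>_. borel) W ({..<n} \<times> {..<m})"
  proof -
    have "indep_vars (\<lambda>_. borel) (\<lambda>p x. (case p of (i, j) \<Rightarrow> (\<lambda>z. exp (l * (\<bar>z\<bar> - a i j)))) ((\<lambda>(i, j). X i j) p x)) ({..<n} \<times> {..<m})"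
      by (rule indep_vars_compose2[OF indep]) auto
    moreover have "(\<lambda>p x. (case p of (i, j) \<Rightarrow> (\<lambda>z. exp (l * (\<bar>z\<bar> - a i j)))) ((\<lambda>(i, j). X i j) p x)) = W"
      unfolding W_def by (auto intro!: ext split: prod.splits)
    ultimately show ?thesis by simp
  qed
  then have indW': "indep_vars (\<lambda>_. borel) W (T \<times> {..<m})"
    by (rule indep_vars_subset) (use T in auto)
  have Wint: "integrable M (W p)" and Wle: "integral\<^sup>L M (W p) \<le> exp (2 * \<sigma>2 * \<psi>)"
    if hp: "p \<in> T \<times> {..<m}" for p
  proof -
    obtain i j where p: "p = (i, j)" "i < n" "j < m" using hp T by auto
    have "W p = (\<lambda>\<omega>. exp (l * (\<bar>X i j \<omega>\<bar> - integral\<^sup>L M (\<lambda>x. \<bar>X i j x\<bar>))))"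
      unfolding W_def a_def p by simp
    then show "integrable M (W p)" "integral\<^sup>L M (W p) \<le> exp (2 * \<sigma>2 * \<psi>)"
      using entry_mgf[OF P subP[OF p(2,3)] centered[OF p(2,3)] l] unfolding \<psi>_def by auto
  qed
  have Wnn: "W p \<omega> \<ge> 0" for p \<omega> unfolding W_def by (auto split: prod.splits)
  define F where "F \<omega> = (\<Prod>p\<in>T \<times> {..<m}. W p \<omega>)" for \<omega>
  have Fint: "integrable M F" unfolding F_def
    by (rule indep_vars_integrable) (use finT indW' Wint in auto)
  have Feq: "integral\<^sup>L M F = (\<Prod>p\<in>T \<times> {..<m}. integral\<^sup>L M (W p))" unfolding F_def
    by (rule indep_vars_lebesgue_integral) (use finT indW' Wint in auto)
  have "integral\<^sup>L M F \<le> (\<Prod>p\<in>T \<times> {..<m}. exp (2 * \<sigma>2 * \<psi>))"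
    unfolding Feq by (intro prod_mono conjI integral_nonneg_AE AE_I2 Wnn Wle) auto
  also have "\<dots> = exp (2 * \<sigma>2 * \<psi>) ^ (card T * m)" by (simp add: card_cartesian_product)
  finally have Fle: "integral\<^sup>L M F \<le> exp (2 * \<sigma>2 * \<psi>) ^ (card T * m)" .
  define A where "A = {\<omega> \<in> space M. \<forall>i\<in>T. row_dev M X m i \<omega> \<ge> x}"
  have rvrd: "(\<lambda>\<omega>. row_dev M X m i \<omega>) \<in> borel_measurable M" if "i \<in> T" for i
  proof -
    have "i < n" using that T by auto
    then show ?thesis unfolding rd[OF \<open>i < n\<close>] using rv[OF \<open>i < n\<close>] by measurable
  qed
  have Ameas: "A \<in> sets M" unfolding A_def
    using rvrd finT by measurable
  have ptw: "indicator A \<omega> \<le> exp (- l * x) ^ card T * F \<omega>" for \<omega>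
  proof (cases "\<omega> \<in> A")
    case False
    then show ?thesis using Wnn unfolding F_def by (simp add: prod_nonneg)
  next
    case True
    have "exp (- l * x) ^ card T * F \<omega> = (\<Prod>i\<in>T. exp (- l * x) * (\<Prod>j<m. W (i, j) \<omega>))"
    proof -
      have "F \<omega> = (\<Prod>i\<in>T. \<Prod>j<m. W (i, j) \<omega>)"
        unfolding F_def using prod.cartesian_product[of "\<lambda>i j. W (i, j) \<omega>" "{..<m}" T]
        by (simp add: case_prod_beta')
      then show ?thesis by (simp add: prod.distrib)
    qed
    also have "\<dots> = (\<Prod>i\<in>T. exp (l * (row_dev M X m i \<omega> - x)))"
    proof (rule prod.cong[OF refl])
      fix i assume "i \<in> T"
      then have "i < n" using T by auto
      have "(\<Prod>j<m. W (i, j) \<omega>) = exp (l * row_dev M X m i \<omega>)"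
        unfolding rd[OF \<open>i < n\<close>] W_def by (simp add: exp_sum sum_distrib_left)
      then show "exp (- l * x) * (\<Prod>j<m. W (i, j) \<omega>) = exp (l * (row_dev M X m i \<omega> - x))"
        by (simp add: exp_add[symmetric] algebra_simps)
    qed
    also have "\<dots> \<ge> (\<Prod>i\<in>T. 1)"
      using True l unfolding A_def by (intro prod_mono) auto
    finally show ?thesis using True by simp
  qed
  have "measure M A = integral\<^sup>L M (indicator A)" using Ameas by simp
  also have "\<dots> \<le> integral\<^sup>L M (\<lambda>\<omega>. exp (- l * x) ^ card T * F \<omega>)"
    by (intro integral_mono ptw Fint integrable_mult_right integrable_real_indicator Ameas) (simp add: emeasure_space_1 less_top[symmetric])
  also have "\<dots> = exp (- l * x) ^ card T * integral\<^sup>L M F" by simp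
  also have "\<dots> \<le> exp (- l * x) ^ card T * exp (2 * \<sigma>2 * \<psi>) ^ (card T * m)"
    by (intro mult_left_mono Fle) auto
  also have "\<dots> = exp (- l * x + 2 * (real m * \<sigma>2) * \<psi>) ^ card T"
    by (simp add: power_mult exp_add[symmetric] power_mult_distrib[symmetric] exp_of_nat_mult[symmetric] algebra_simps)
  finally show ?thesis unfolding A_def \<psi>_def .
qed



lemma wexp_mono:
  fixes w L :: real assumes "1 \<le> w" "w \<le> L"
  shows "L * exp (- L) \<le> w * exp (- w)"
proof -
  have "ln (L / w) \<le> L / w - 1" using assms by (intro ln_le_minus_one) auto
  also have "\<dots> = (L - w) / w" using assms by (simp add: field_simps)
  also have "\<dots> \<le> L - w"
  proof -
    have "(L - w) * 1 \<le> (L - w) * w" using assms by (intro mult_left_mono) auto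
    then show ?thesis using assms by (simp add: divide_le_eq)
  qed
  finally have "ln L - ln w \<le> L - w" using assms by (simp add: ln_div)
  then have "ln L - L \<le> ln w - w" by simp
  then have "exp (ln L - L) \<le> exp (ln w - w)" by simp
  then show ?thesis using assms by (simp add: exp_diff exp_minus field_simps)
qed

theorem lemmaD2:
  fixes M :: "'a measure" and X :: "nat \<Rightarrow> nat \<Rightarrow> 'a \<Rightarrow> real"
    and n m :: nat and \<sigma>2 :: real
  assumes "prob_space M"
    and "n \<ge> 1" and "m \<ge> 1"
    and "\<sigma>2 \<ge> 0"
    and indep: "prob_space.indep_vars M (\<lambda>_. borel) (\<lambda>(i, j). X i j) ({..<n} \<times> {..<m})"
    and centered: "\<And>i j. i < n \<Longrightarrow> j < m \<Longrightarrow> integral\<^sup>L M (X i j) = 0"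
    and subP: "\<And>i j. i < n \<Longrightarrow> j < m \<Longrightarrow> sub_poisson M (X i j) \<sigma>2"
  shows "(real m * \<sigma>2 \<le> 8 * ln (exp 1 * real n) \<longrightarrow>
           (\<forall>t\<ge>0. measure M {\<omega> \<in> space M.
               real (card {i. i < n \<and> row_dev M X m i \<omega> \<ge> (1 + t) * real m * \<sigma>2})
                 \<ge> exp 1 * real n / exp (real m * \<sigma>2 / 8)}
             \<le> (exp 1 * real n) powr (- t)))
       \<and> (real m * \<sigma>2 \<ge> 8 * ln (exp 1 * real n) \<longrightarrow>
           (\<forall>t\<ge>0. measure M {\<omega> \<in> space M.
               Max ((\<lambda>i. row_dev M X m i \<omega>) ` {..<n})
                 \<ge> (1 + t) * sqrt (8 * real m * \<sigma>2 * ln (exp 1 * real n))}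
             \<le> (exp 1 * real n) powr (- t)))"
proof -
  interpret prob_space M by (rule assms(1))
  define L where "L = ln (exp 1 * real n)"
  define v where "v = real m * \<sigma>2"
  have n0: "real n \<ge> 1" using assms(2) by simp
  have nL: "L = 1 + ln (real n)" unfolding L_def using n0 by (simp add: ln_mult)
  have L1: "L \<ge> 1" using nL n0 by simp
  have expL: "exp L = exp 1 * real n" unfolding L_def using n0 by simp
  have v0: "v \<ge> 0" unfolding v_def using assms(4) by simp
  have powr_eq: "(exp 1 * real n) powr (- t) = exp (- t * L)" for t
    unfolding L_def using n0 by (simp add: powr_def)
  have rv: "X i j \<in> borel_measurable M" if "i < n" "j < m" for i j
    using indep that unfolding indep_vars_def by auto
  have rdm: "(\<lambda>\<omega>. row_dev M X m i \<omega>) \<in> borel_measurable M" if "i < n" for i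
    unfolding row_dev_def using rv[OF that] by measurable
  have Bmeas: "{\<omega> \<in> space M. \<forall>i\<in>T. row_dev M X m i \<omega> \<ge> x} \<in> sets M" if "T \<subseteq> {..<n}" for T x
  proof -
    have "finite T" using that finite_subset by blast
    moreover have "\<And>i. i \<in> T \<Longrightarrow> (\<lambda>\<omega>. row_dev M X m i \<omega>) \<in> borel_measurable M"
      using rdm that by auto
    ultimately show ?thesis by measurable
  qed
  have Bmeas1: "{\<omega> \<in> space M. x \<le> row_dev M X m i \<omega>} \<in> sets M" if "i < n" for i x
    using Bmeas[of "{i}" x] that by simp
  note core' = core[OF assms(1) indep centered subP]
  show ?thesis
  proof (intro conjI impI allI)
    fix t :: real assume vle: "real m * \<sigma>2 \<le> 8 * ln (exp 1 * real n)" and t: "0 \<le> t"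
    show "measure M {\<omega> \<in> space M.
               real (card {i. i < n \<and> row_dev M X m i \<omega> \<ge> (1 + t) * real m * \<sigma>2})
                 \<ge> exp 1 * real n / exp (real m * \<sigma>2 / 8)}
             \<le> (exp 1 * real n) powr (- t)"
    proof -
      define x where "x = (1 + t) * real m * \<sigma>2"
      define K where "K = exp 1 * real n / exp (real m * \<sigma>2 / 8)"
      define w where "w = v / 8"
      define E where "E = {\<omega> \<in> space M. real (card {i. i < n \<and> row_dev M X m i \<omega> \<ge> x}) \<ge> K}"
      have cardle: "card {i. i < n \<and> row_dev M X m i \<omega> \<ge> x} \<le> n" for \<omega>
        using card_mono[of "{..<n}" "{i. i < n \<and> row_dev M X m i \<omega> \<ge> x}"] by auto
      have Kw: "K = exp 1 * real n / exp w" unfolding K_def w_def v_def by simp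
      have Kpos: "K > 0" unfolding Kw using n0 by simp
      have "measure M E \<le> exp (- t * L)"
      proof (cases "K > real n")
        case True
        have "E = {}" unfolding E_def using True cardle
          by (auto simp: not_le) (metis of_nat_le_iff order.strict_trans2 linorder_not_le)
        then show ?thesis by simp
      next
        case False
        then have Kn: "K \<le> real n" by simp
        have "exp 1 \<le> exp w"
        proof -
          have "exp 1 * real n \<le> real n * exp w" using Kn unfolding Kw by (simp add: divide_le_eq)
          then show ?thesis using n0 by (simp add: mult.commute)
        qed
        then have w1: "1 \<le> w" by simp
        have wL: "w \<le> L" using vle unfolding w_def v_def L_def by simp
        define k where "k = nat \<lceil>K\<rceil>"
        have kK: "K \<le> real k" unfolding k_def using Kpos by linarith
        have k1: "1 \<le> k" unfolding k_def using Kpos by linarith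
        have kn: "k \<le> n" unfolding k_def using Kn by (simp add: nat_le_iff ceiling_le_iff)
        define l :: real where "l = 1 / 4"
        define p where "p = exp (- l * x + 2 * v * (exp l - 1 - l))"
        have psi: "exp l - 1 - l \<le> 1 / 16" using psi_le[of l] unfolding l_def by (simp add: power2_eq_square)
        have p_le: "p \<le> exp (- x / 4 + v / 8)"
        proof -
          have "2 * v * (exp l - 1 - l) \<le> 2 * v * (1/16)" using psi v0 by (intro mult_left_mono) auto
          then show ?thesis unfolding p_def l_def by simp
        qed
        have p0: "p \<ge> 0" unfolding p_def by simp
        define B where "B T = {\<omega> \<in> space M. \<forall>i\<in>T. row_dev M X m i \<omega> \<ge> x}" for T
        define \<T> where "\<T> = {T. T \<subseteq> {..<n} \<and> card T = k}"
        have finT: "finite \<T>" unfolding \<T>_def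
          by (rule finite_subset[of _ "Pow {..<n}"]) auto
        have cardT: "card \<T> = n choose k" unfolding \<T>_def using n_subsets[of "{..<n}" k] by simp
        have sub: "E \<subseteq> (\<Union>T\<in>\<T>. B T)"
        proof
          fix \<omega> assume "\<omega> \<in> E"
          then have om: "\<omega> \<in> space M" and cK: "K \<le> real (card {i. i < n \<and> row_dev M X m i \<omega> \<ge> x})"
            unfolding E_def by auto
          have "k \<le> card {i. i < n \<and> row_dev M X m i \<omega> \<ge> x}"
            unfolding k_def using cK by (simp add: nat_le_iff ceiling_le_iff)
          then obtain T where "T \<subseteq> {i. i < n \<and> row_dev M X m i \<omega> \<ge> x}" "card T = k"
            by (rule obtain_subset_with_card_n)
          then show "\<omega> \<in> (\<Union>T\<in>\<T>. B T)" unfolding \<T>_def B_def using om by blast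
        qed
        have "measure M E \<le> measure M (\<Union>T\<in>\<T>. B T)"
          by (rule finite_measure_mono[OF sub]) (use finT Bmeas in \<open>auto simp: \<T>_def B_def\<close>)
        also have "\<dots> \<le> (\<Sum>T\<in>\<T>. measure M (B T))"
          by (rule measure_UNION_le[OF finT]) (use Bmeas in \<open>auto simp: \<T>_def B_def\<close>)
        also have "\<dots> \<le> (\<Sum>T\<in>\<T>. p ^ k)"
        proof (rule sum_mono)
          fix T assume "T \<in> \<T>"
          then have "T \<subseteq> {..<n}" "card T = k" unfolding \<T>_def by auto
          then show "measure M (B T) \<le> p ^ k"
            using core'[of T l x] unfolding B_def p_def v_def l_def by simp
        qed
        also have "\<dots> = real (n choose k) * p ^ k" using cardT by simp
        also have "\<dots> \<le> (exp 1 * real n / real k) ^ k * p ^ k"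
          by (intro mult_right_mono choose_le_exp k1) (simp add: p0)
        also have "\<dots> = (exp 1 * real n * p / real k) ^ k" by (simp add: power_mult_distrib[symmetric])
        also have "\<dots> \<le> exp (- t * v / 4) ^ k"
        proof (rule power_mono)
          have "exp 1 * real n * p / real k \<le> exp 1 * real n * p / K"
            using kK Kpos p0 n0 by (intro divide_left_mono) auto
          also have "\<dots> = p * exp w" unfolding Kw using n0 by (simp add: field_simps)
          also have "\<dots> \<le> exp (- x / 4 + v / 8) * exp w" using p_le by (intro mult_right_mono) auto
          also have "\<dots> = exp (- t * v / 4)"
            unfolding exp_add[symmetric] x_def w_def v_def by (simp add: field_simps)
          finally show "exp 1 * real n * p / real k \<le> exp (- t * v / 4)" .
          show "0 \<le> exp 1 * real n * p / real k" using p0 by simp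
        qed
        also have "\<dots> = exp (- (t * v * real k / 4))" by (simp add: exp_of_nat_mult[symmetric] algebra_simps)
        also have "\<dots> \<le> exp (- (t * L))"
        proof -
          have key: "L \<le> v * K / 4"
          proof -
            have "L * exp (- L) \<le> w * exp (- w)" by (rule wexp_mono[OF w1 wL])
            then have "L * exp (- L) * (exp 1 * real n) \<le> w * exp (- w) * (exp 1 * real n)"
              using n0 by (intro mult_right_mono) auto
            moreover have "L * exp (- L) * (exp 1 * real n) = L" using expL n0 by (simp add: exp_minus field_simps)
            moreover have "w * exp (- w) * (exp 1 * real n) = v * K / 8" unfolding Kw w_def
              by (simp add: exp_minus field_simps)
            ultimately have "L \<le> v * K / 8" by simp
            moreover have "v * K / 8 \<le> v * K / 4" using v0 Kpos by simp
            ultimately show ?thesis by linarith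
          qed
          have "t * L \<le> t * (v * K / 4)" using key t by (intro mult_left_mono) auto
          also have "\<dots> \<le> t * (v * real k / 4)" using kK t v0 by (intro mult_left_mono) (auto intro: mult_left_mono)
          finally show ?thesis by (simp add: algebra_simps)
        qed
        finally show ?thesis by simp
      qed
      then show ?thesis unfolding E_def x_def K_def powr_eq .
    qed
  next
    fix t :: real assume vge: "real m * \<sigma>2 \<ge> 8 * ln (exp 1 * real n)" and t: "0 \<le> t"
    define x where "x = (1 + t) * sqrt (8 * real m * \<sigma>2 * ln (exp 1 * real n))"
    have vL: "v \<ge> 8 * L" using vge unfolding v_def L_def .
    have vpos: "v > 0" using vL L1 by simp
    define s where "s = sqrt (8 * L / v)"
    define l where "l = s / 4"
    have s1: "s \<le> 1" unfolding s_def using vL vpos by (simp add: divide_le_eq)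
    have l0: "0 \<le> l" unfolding l_def s_def using vpos L1 by simp
    have l1: "l \<le> 1" using s1 unfolding l_def by simp
    have xeq: "x = (1 + t) * sqrt (8 * v * L)" unfolding x_def v_def L_def by (simp add: mult.assoc)
    have "s * sqrt (8 * v * L) = sqrt ((8 * L / v) * (8 * v * L))" unfolding s_def by (rule real_sqrt_mult[symmetric])
    also have "(8 * L / v) * (8 * v * L) = (8 * L)^2" using vpos by (simp add: field_simps power2_eq_square)
    also have "sqrt ((8 * L)^2) = 8 * L" using L1 by (subst real_sqrt_abs) simp
    finally have sx: "s * sqrt (8 * v * L) = 8 * L" .
    have "l * x = (1 + t) / 4 * (s * sqrt (8 * v * L))" unfolding xeq l_def by (simp add: algebra_simps)
    then have lx: "l * x = 2 * (1 + t) * L" using sx by simp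
    have ssq: "s^2 = 8 * L / v" unfolding s_def using vpos L1 by simp
    have psi: "2 * v * (exp l - 1 - l) \<le> L"
    proof -
      have "2 * v * (exp l - 1 - l) \<le> 2 * v * l^2" using psi_le[OF l0 l1] v0 by (intro mult_left_mono) auto
      also have "\<dots> = L" unfolding l_def using ssq vpos by (simp add: power_divide field_simps)
      finally show ?thesis .
    qed
    have p_le: "exp (- l * x + 2 * v * (exp l - 1 - l)) \<le> exp (L - 2 * (1 + t) * L)"
      using lx psi by simp
    have sub: "{\<omega> \<in> space M. Max ((\<lambda>i. row_dev M X m i \<omega>) ` {..<n}) \<ge> x}
       \<subseteq> (\<Union>i\<in>{..<n}. {\<omega> \<in> space M. \<forall>i'\<in>{i}. row_dev M X m i' \<omega> \<ge> x})"
    proof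
      fix \<omega> assume "\<omega> \<in> {\<omega> \<in> space M. Max ((\<lambda>i. row_dev M X m i \<omega>) ` {..<n}) \<ge> x}"
      then have "\<omega> \<in> space M" "x \<le> Max ((\<lambda>i. row_dev M X m i \<omega>) ` {..<n})" by auto
      moreover have "(\<lambda>i. row_dev M X m i \<omega>) ` {..<n} \<noteq> {}" using assms(2) by (auto simp: lessThan_empty_iff)
      ultimately show "\<omega> \<in> (\<Union>i\<in>{..<n}. {\<omega> \<in> space M. \<forall>i'\<in>{i}. row_dev M X m i' \<omega> \<ge> x})"
        by (subst (asm) Max_ge_iff) auto
    qed
    have "measure M {\<omega> \<in> space M. Max ((\<lambda>i. row_dev M X m i \<omega>) ` {..<n}) \<ge> x}
        \<le> measure M (\<Union>i\<in>{..<n}. {\<omega> \<in> space M. \<forall>i'\<in>{i}. row_dev M X m i' \<omega> \<ge> x})"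
      by (rule finite_measure_mono[OF sub]) (auto intro!: Bmeas1)
    also have "\<dots> \<le> (\<Sum>i\<in>{..<n}. measure M {\<omega> \<in> space M. \<forall>i'\<in>{i}. row_dev M X m i' \<omega> \<ge> x})"
      by (rule measure_UNION_le) (auto intro: Bmeas1)
    also have "\<dots> \<le> (\<Sum>i\<in>{..<n}. exp (- l * x + 2 * v * (exp l - 1 - l)))"
      using core'[of "{_}" l x] l0 unfolding v_def by (intro sum_mono) auto
    also have "\<dots> = real n * exp (- l * x + 2 * v * (exp l - 1 - l))" by simp
    also have "\<dots> \<le> real n * exp (L - 2 * (1 + t) * L)" by (rule mult_left_mono[OF p_le]) simp
    also have "\<dots> \<le> exp L * exp (L - 2 * (1 + t) * L)" using expL n0
      by (intro mult_right_mono) auto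
    also have "\<dots> = exp (- (2 * t) * L)" by (simp add: exp_add[symmetric] algebra_simps)
    also have "\<dots> \<le> exp (- t * L)" using t L1 by (simp add: mult_right_mono)
    finally show "measure M {\<omega> \<in> space M.
               Max ((\<lambda>i. row_dev M X m i \<omega>) ` {..<n})
                 \<ge> (1 + t) * sqrt (8 * real m * \<sigma>2 * ln (exp 1 * real n))}
             \<le> (exp 1 * real n) powr (- t)" unfolding powr_eq x_def .
  qed
qed

end
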